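(* Let $X$ be a nonempty compact metric space. Any two complete tree systems of peripheral extensions of $X$ are isomorphic.
   Context: A peripheral extension of $X$ is a compact metric space $\ddot X$ containing a countably infinite discrete open dense subset $P$ (the peripheral points) with $\ddot X\setminus P$ homeomorphic to $X$. Let $T$ be the countable tree in which every vertex has infinite valence, $V_T$ its vertex set, and $N_t$ the set of oriented edges of $T$ with initial vertex $t$. A complete tree system of peripheral extensions of $X$ is a tuple $\Theta=(\{X_t\},\{b_t\})$ where for each $t\in V_T$, $X_t$ is a space homeomorphic to $X$ equipped with a peripheral extension $\ddot X_t$ with peripheral set $P_t$, and $b_t:N_t\to P_t$ is a bijection. An isomorphism $\Theta\to\Theta'=(\{X'_t\},\{b'_t\})$ is a tuple $(\lambda,\{f_t\})$ where $\lambda:T\to T$ is a tree automorphism, each $f_t:\ddot X_t\to\ddot X'_{\lambda(t)}$ is a homeomorphism mapping $X_t$ onto $X'_{\lambda(t)}$, and $b'_{\lambda(t)}(\lambda(e))=f_t(b_t(e))$ for all $t\in V_T$, $e\in N_t$. *)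

theory Defs
  imports "HOL-Analysis.Analysis"
begin

definition is_tree :: "'v set \<Rightarrow> ('v \<times> 'v) set \<Rightarrow> bool" where
  "is_tree V E \<longleftrightarrow>
     V \<noteq> {} \<and> E \<subseteq> V \<times> V \<and>
     (\<forall>x y. (x, y) \<in> E \<longrightarrow> (y, x) \<in> E) \<and>
     (\<forall>x. (x, x) \<notin> E) \<and>
     (\<forall>x\<in>V. \<forall>y\<in>V. (x, y) \<in> E\<^sup>*) \<and>
     \<not> (\<exists>xs. 3 \<le> length xs \<and> distinct xs \<and>
            (\<forall>i. Suc i < length xs \<longrightarrow> (xs ! i, xs ! Suc i) \<in> E) \<and>
            (last xs, hd xs) \<in> E)"

definition countable_inf_valence_tree :: "'v set \<Rightarrow> ('v \<times> 'v) set \<Rightarrow> bool" where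
  "countable_inf_valence_tree V E \<longleftrightarrow>
     is_tree V E \<and> countable V \<and> (\<forall>t\<in>V. infinite {s. (t, s) \<in> E})"

definition out_edges :: "('v \<times> 'v) set \<Rightarrow> 'v \<Rightarrow> ('v \<times> 'v) set" where
  "out_edges E t = {e \<in> E. fst e = t}"

definition tree_automorphism :: "'v set \<Rightarrow> ('v \<times> 'v) set \<Rightarrow> ('v \<Rightarrow> 'v) \<Rightarrow> bool" where
  "tree_automorphism V E lam \<longleftrightarrow>
     bij_betw lam V V \<and> (\<forall>s\<in>V. \<forall>t\<in>V. (s, t) \<in> E \<longleftrightarrow> (lam s, lam t) \<in> E)"

definition edge_map :: "('v \<Rightarrow> 'v) \<Rightarrow> 'v \<times> 'v \<Rightarrow> 'v \<times> 'v" where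
  "edge_map lam e = (lam (fst e), lam (snd e))"

definition peripheral_extension :: "'c topology \<Rightarrow> 'a topology \<Rightarrow> 'a set \<Rightarrow> bool" where
  "peripheral_extension X Y P \<longleftrightarrow>
     compact_space Y \<and> metrizable_space Y \<and>
     P \<subseteq> topspace Y \<and> countable P \<and> infinite P \<and>
     subtopology Y P = discrete_topology P \<and>
     openin Y P \<and> Y closure_of P = topspace Y \<and>
     subtopology Y (topspace Y - P) homeomorphic_space X"

text \<open>A complete tree system of peripheral extensions of X over the tree (V,E):
  for each vertex t, the space Xdd t is the peripheral extension with peripheral
  set P t; the space X_t is topspace (Xdd t) - P t (with the
  subspace topology), which is homeomorphic to X; and b t is a bijection from the
  oriented edges at t onto P t.\<close>
definition tree_system ::
  "'v set \<Rightarrow> ('v \<times> 'v) set \<Rightarrow> 'c topology \<Rightarrow>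
   ('v \<Rightarrow> 'a topology) \<Rightarrow> ('v \<Rightarrow> 'a set) \<Rightarrow> ('v \<Rightarrow> 'v \<times> 'v \<Rightarrow> 'a) \<Rightarrow> bool" where
  "tree_system V E X Xdd P b \<longleftrightarrow>
     (\<forall>t\<in>V. peripheral_extension X (Xdd t) (P t) \<and> bij_betw (b t) (out_edges E t) (P t))"

definition tree_system_iso ::
  "'v set \<Rightarrow> ('v \<times> 'v) set \<Rightarrow>
   ('v \<Rightarrow> 'a topology) \<Rightarrow> ('v \<Rightarrow> 'a set) \<Rightarrow> ('v \<Rightarrow> 'v \<times> 'v \<Rightarrow> 'a) \<Rightarrow>
   ('v \<Rightarrow> 'b topology) \<Rightarrow> ('v \<Rightarrow> 'b set) \<Rightarrow> ('v \<Rightarrow> 'v \<times> 'v \<Rightarrow> 'b) \<Rightarrow>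
   ('v \<Rightarrow> 'v) \<Rightarrow> ('v \<Rightarrow> 'a \<Rightarrow> 'b) \<Rightarrow> bool" where
  "tree_system_iso V E Xdd P b Xdd' P' b' lam f \<longleftrightarrow>
     tree_automorphism V E lam \<and>
     (\<forall>t\<in>V.
        homeomorphic_map (Xdd t) (Xdd' (lam t)) (f t) \<and>
        f t ` (topspace (Xdd t) - P t) = topspace (Xdd' (lam t)) - P' (lam t) \<and>
        (\<forall>e\<in>out_edges E t. b' (lam t) (edge_map lam e) = f t (b t e)))"

end

theory Submission
  imports Defs
begin


locale pext =
  fixes S Q :: "'m::metric_space set"
  assumes cS: "compact S" and QS: "Q \<subseteq> S"
    and iso: "\<And>q. q \<in> Q \<Longrightarrow> \<exists>e>0. \<forall>y\<in>S. dist y q < e \<longrightarrow> y = q"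
    and dens: "\<And>x \<eta>. x \<in> S - Q \<Longrightarrow> \<eta> > 0 \<Longrightarrow> \<exists>q\<in>Q. dist q x < \<eta>"
    and cQ: "countable Q" and iQ: "infinite Q" and Kne: "S - Q \<noteq> {}"
begin

lemma fin_far:
  assumes "T \<subseteq> Q" "\<epsilon> > 0" "\<And>q y. q \<in> T \<Longrightarrow> y \<in> S - Q \<Longrightarrow> \<epsilon> \<le> dist q y"
  shows "finite T"
proof (rule ccontr)
  assume "infinite T"
  then obtain x where x: "x \<in> S" "x islimpt T"
    using Heine_Borel_imp_Bolzano_Weierstrass[OF cS] assms(1) QS by blast
  show False
  proof (cases "x \<in> Q")
    case True
    then obtain e where e: "e > 0" "\<forall>y\<in>S. dist y x < e \<longrightarrow> y = x" using iso by blast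
    then obtain x' where "x' \<in> T" "x' \<noteq> x" "dist x' x < e" using x(2) islimpt_approachable by blast
    then show False using e assms(1) QS by blast
  next
    case False
    then obtain x' where "x' \<in> T" "dist x' x < \<epsilon>" using x(2) islimpt_approachable assms(2) by blast
    then show False using assms(3)[of x' x] False x(1) by force
  qed
qed

lemma near:
  assumes "x \<in> S - Q" "\<eta> > 0" "finite F"
  shows "\<exists>q\<in>Q - F. dist q x < \<eta>"
proof -
  obtain d where d: "d > 0" "\<forall>y\<in>F - {x}. d \<le> dist x y"
    using finite_set_avoid[of "F - {x}" x] assms(3) by auto
  obtain q where q: "q \<in> Q" "dist q x < min \<eta> d" using dens[OF assms(1)] d(1) assms(2)
    by (metis min_less_iff_conj)
  have "q \<noteq> x" using q(1) assms(1) by auto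
  moreover have "q \<notin> F" using d q \<open>q \<noteq> x\<close> by (metis DiffI dist_commute min_less_iff_conj not_le singletonD)
  ultimately show ?thesis using q by auto
qed

definition "K = S - Q"

lemma cK: "compact K"
proof -
  have "\<forall>q\<in>Q. \<exists>e>0. \<forall>y\<in>S. dist y q < e \<longrightarrow> y = q" using iso by blast
  then obtain e where e: "\<And>q. q \<in> Q \<Longrightarrow> e q > 0 \<and> (\<forall>y\<in>S. dist y q < e q \<longrightarrow> y = q)"
    by metis
  define U where "U = (\<Union>q\<in>Q. ball q (e q))"
  have "open U" unfolding U_def by auto
  have "K = S \<inter> - U"
  proof
    show "K \<subseteq> S \<inter> - U" unfolding K_def U_def using e by (auto simp: dist_commute) (metis dist_commute)
    show "S \<inter> - U \<subseteq> K"
    proof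
      fix x assume x: "x \<in> S \<inter> - U"
      have "x \<notin> Q"
      proof
        assume "x \<in> Q" then have "x \<in> ball x (e x)" using e by auto
        then show False using x \<open>x \<in> Q\<close> unfolding U_def by blast
      qed
      then show "x \<in> K" using x K_def by auto
    qed
  qed
  then show ?thesis using cS \<open>open U\<close> by (simp add: compact_Int_closed open_closed)
qed

definition "r a = (SOME k. k \<in> K \<and> (\<forall>y\<in>K. dist a k \<le> dist a y))"

lemma r: "r a \<in> K" "\<And>y. y \<in> K \<Longrightarrow> dist a (r a) \<le> dist a y"
proof -
  have "K \<noteq> {}" using Kne K_def by auto
  have "continuous_on K (\<lambda>k. dist a k)" by (intro continuous_intros)
  then obtain k where "k \<in> K" "\<forall>y\<in>K. dist a k \<le> dist a y"
    using continuous_attains_inf[OF cK \<open>K \<noteq> {}\<close>] by blast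
  then have "\<exists>k. k \<in> K \<and> (\<forall>y\<in>K. dist a k \<le> dist a y)" by blast
  from someI_ex[OF this] have "r a \<in> K \<and> (\<forall>y\<in>K. dist a (r a) \<le> dist a y)"
    unfolding r_def .
  then show "r a \<in> K" "\<And>y. y \<in> K \<Longrightarrow> dist a (r a) \<le> dist a y" by auto
qed

lemma fin_far_r:
  assumes "\<epsilon> > 0"
  shows "finite {q\<in>Q. \<epsilon> \<le> dist q (r q)}"
  apply (rule fin_far[of _ \<epsilon>])
  using assms r unfolding K_def by (auto intro: order_trans)

lemma near_r:
  assumes "x \<in> K" "\<eta> > 0" "finite F"
  shows "\<exists>q\<in>Q - F. dist (r q) x < \<eta>"
proof -
  obtain q where q: "q\<in>Q - F" "dist q x < \<eta>/2" using near[of x "\<eta>/2" F] assms K_def by auto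
  have "dist (r q) x \<le> dist (r q) q + dist q x" by (rule dist_triangle)
  also have "dist (r q) q \<le> dist q x" using r(2)[OF assms(1), of q] by (simp add: dist_commute)
  finally show ?thesis using q by (auto intro!: bexI[of _ q])
qed

end



locale ppair = A: pext S Q + B: pext S' Q' for S Q S' Q' :: "'m::metric_space set" +
  fixes h h' a0 a0'
  assumes hom: "homeomorphism A.K B.K h h'"
    and a0: "a0 \<in> Q" and a0': "a0' \<in> Q'"
begin

definition "Cl n a b \<longleftrightarrow> dist (h (A.r a)) (B.r b) < 1 / real (Suc n)"

lemma hK: "h ` A.K = B.K" "continuous_on A.K h" "h' ` B.K = A.K" "continuous_on B.K h'"
  "\<And>x. x \<in> A.K \<Longrightarrow> h' (h x) = x" "\<And>y. y \<in> B.K \<Longrightarrow> h (h' y) = y"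
  using hom unfolding homeomorphism_def by auto

lemma forthl:
  assumes "finite F" shows "\<exists>b\<in>Q' - F. Cl n a b"
proof -
  have "h (A.r a) \<in> B.K" using A.r(1) hK(1) by blast
  then show ?thesis using B.near_r[of "h (A.r a)" "1 / real (Suc n)" F] assms
    unfolding Cl_def by (auto simp: dist_commute)
qed

lemma backl:
  assumes "finite F" shows "\<exists>a\<in>Q - F. Cl n a b"
proof -
  have z: "h' (B.r b) \<in> A.K" using B.r(1) hK(3) by blast
  have "uniformly_continuous_on A.K h"
    using compact_uniformly_continuous[OF hK(2) A.cK] .
  then obtain d where d: "d > 0" "\<forall>x\<in>A.K. \<forall>x'\<in>A.K. dist x' x < d \<longrightarrow> dist (h x') (h x) < 1 / real (Suc n)"
    unfolding uniformly_continuous_on_def by (metis of_nat_0_less_iff zero_less_Suc zero_less_divide_1_iff)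
  obtain a where a: "a \<in> Q - F" "dist (A.r a) (h' (B.r b)) < d"
    using A.near_r[OF z d(1) assms] by blast
  have "dist (h (A.r a)) (h (h' (B.r b))) < 1 / real (Suc n)"
    using d(2) z A.r(1) a(2) by blast
  then show ?thesis using a(1) hK(6)[OF B.r(1)] unfolding Cl_def by auto
qed

definition "inv_rel M \<longleftrightarrow> finite M \<and> M \<subseteq> Q \<times> Q' \<and>
   (\<forall>x y x' y'. (x,y) \<in> M \<longrightarrow> (x',y') \<in> M \<longrightarrow> (x = x') = (y = y'))"

definition "eA = inv_into Q (SOME e::'m \<Rightarrow> nat. bij_betw e Q UNIV)"
definition "eB = inv_into Q' (SOME e::'m \<Rightarrow> nat. bij_betw e Q' UNIV)"

lemma eA: "bij_betw eA UNIV Q"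
proof -
  have "\<exists>e::'m \<Rightarrow> nat. bij_betw e Q UNIV" using countableE_infinite[OF A.cQ A.iQ] by metis
  then show ?thesis unfolding eA_def by (metis bij_betw_inv_into someI_ex)
qed

lemma eB: "bij_betw eB UNIV Q'"
proof -
  have "\<exists>e::'m \<Rightarrow> nat. bij_betw e Q' UNIV" using countableE_infinite[OF B.cQ B.iQ] by metis
  then show ?thesis unfolding eB_def by (metis bij_betw_inv_into someI_ex)
qed

definition "fstep n M = (let a = eA (LEAST i. eA i \<notin> fst ` M) in insert (a, SOME b. b \<in> Q' - snd ` M \<and> Cl n a b) M)"
definition "bstep n M = (let b = eB (LEAST i. eB i \<notin> snd ` M) in insert (SOME a. a \<in> Q - fst ` M \<and> Cl n a b, b) M)"

primrec Mseq where
  "Mseq 0 = {(a0, a0')}"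
| "Mseq (Suc n) = bstep n (fstep n (Mseq n))"

lemma exA: "finite M \<Longrightarrow> \<exists>i. eA i \<notin> fst ` M"
proof -
  assume "finite M"
  then have "finite (fst ` M)" by simp
  then have "\<not> Q \<subseteq> fst ` M" using A.iQ finite_subset by blast
  then show ?thesis using eA by (metis bij_betw_imp_surj_on imageE subsetI)
qed

lemma exB: "finite M \<Longrightarrow> \<exists>i. eB i \<notin> snd ` M"
proof -
  assume "finite M"
  then have "finite (snd ` M)" by simp
  then have "\<not> Q' \<subseteq> snd ` M" using B.iQ finite_subset by blast
  then show ?thesis using eB by (metis bij_betw_imp_surj_on imageE subsetI)
qed

lemma fstep:
  assumes "inv_rel M"
  shows "inv_rel (fstep n M)" "M \<subseteq> fstep n M" "\<And>p. p \<in> fstep n M - M \<Longrightarrow> Cl n (fst p) (snd p)"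
    "eA (LEAST i. eA i \<notin> fst ` M) \<in> fst ` fstep n M"
proof -
  define a where "a = eA (LEAST i. eA i \<notin> fst ` M)"
  have fin: "finite M" using assms inv_rel_def by auto
  have anM: "a \<notin> fst ` M" unfolding a_def using LeastI_ex[OF exA[OF fin]] .
  have aQ: "a \<in> Q" unfolding a_def by (rule bij_betw_apply[OF eA]) simp
  have finB: "finite (snd ` M)" using fin by simp
  have ex: "\<exists>b. b \<in> Q' - snd ` M \<and> Cl n a b" using forthl[OF finB, of n a] by blast
  define b where bdef: "b = (SOME b. b \<in> Q' - snd ` M \<and> Cl n a b)"
  have b: "b \<in> Q' - snd ` M" "Cl n a b" using someI_ex[OF ex] unfolding bdef by auto
  have eq: "fstep n M = insert (a, b) M" unfolding fstep_def a_def[symmetric] Let_def bdef ..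
  have n1: "\<And>y. (a,y) \<notin> M" using anM by force
  have n2: "\<And>x. (x,b) \<notin> M" using b(1) by force
  show "inv_rel (fstep n M)" using assms n1 n2 aQ b unfolding eq inv_rel_def by auto
  show "M \<subseteq> fstep n M" unfolding eq by auto
  show "\<And>p. p \<in> fstep n M - M \<Longrightarrow> Cl n (fst p) (snd p)" unfolding eq using b by auto
  show "eA (LEAST i. eA i \<notin> fst ` M) \<in> fst ` fstep n M" unfolding eq a_def[symmetric] by auto
qed

lemma bstep:
  assumes "inv_rel M"
  shows "inv_rel (bstep n M)" "M \<subseteq> bstep n M" "\<And>p. p \<in> bstep n M - M \<Longrightarrow> Cl n (fst p) (snd p)"
    "eB (LEAST i. eB i \<notin> snd ` M) \<in> snd ` bstep n M"
proof -
  define b where "b = eB (LEAST i. eB i \<notin> snd ` M)"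
  have fin: "finite M" using assms inv_rel_def by auto
  have bnM: "b \<notin> snd ` M" unfolding b_def using LeastI_ex[OF exB[OF fin]] .
  have bQ: "b \<in> Q'" unfolding b_def by (rule bij_betw_apply[OF eB]) simp
  have finA: "finite (fst ` M)" using fin by simp
  have ex: "\<exists>a. a \<in> Q - fst ` M \<and> Cl n a b" using backl[OF finA, of n b] by blast
  define a where adef: "a = (SOME a. a \<in> Q - fst ` M \<and> Cl n a b)"
  have a: "a \<in> Q - fst ` M" "Cl n a b" using someI_ex[OF ex] unfolding adef by auto
  have eq: "bstep n M = insert (a, b) M" unfolding bstep_def b_def[symmetric] Let_def adef ..
  have n1: "\<And>y. (a,y) \<notin> M" using a(1) by force
  have n2: "\<And>x. (x,b) \<notin> M" using bnM by force
  show "inv_rel (bstep n M)" using assms n1 n2 bQ a unfolding eq inv_rel_def by auto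
  show "M \<subseteq> bstep n M" unfolding eq by auto
  show "\<And>p. p \<in> bstep n M - M \<Longrightarrow> Cl n (fst p) (snd p)" unfolding eq using a by auto
  show "eB (LEAST i. eB i \<notin> snd ` M) \<in> snd ` bstep n M" unfolding eq b_def[symmetric] by auto
qed

lemma Mseq_inv: "inv_rel (Mseq n)"
proof (induction n)
  case 0 then show ?case using a0 a0' by (auto simp: inv_rel_def)
next
  case (Suc n) then show ?case using fstep(1) bstep(1) by simp
qed

lemma Mseq_step: "Mseq n \<subseteq> Mseq (Suc n)"
proof -
  have "Mseq n \<subseteq> fstep n (Mseq n)" by (rule fstep(2)[OF Mseq_inv])
  also have "fstep n (Mseq n) \<subseteq> bstep n (fstep n (Mseq n))" by (rule bstep(2)[OF fstep(1)[OF Mseq_inv]])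
  finally show ?thesis by simp
qed

lemma Mseq_mono: "m \<le> n \<Longrightarrow> Mseq m \<subseteq> Mseq n"
  by (induction n rule: dec_induct) (use Mseq_step in auto)

lemma Mseq_new: "p \<in> Mseq (Suc n) - Mseq n \<Longrightarrow> Cl n (fst p) (snd p)"
proof -
  assume p: "p \<in> Mseq (Suc n) - Mseq n"
  have i: "inv_rel (Mseq n)" by (rule Mseq_inv)
  show ?thesis
  proof (cases "p \<in> fstep n (Mseq n)")
    case True then show ?thesis using fstep(3)[OF i] p by auto
  next
    case False then show ?thesis using bstep(3)[OF fstep(1)[OF i]] p by auto
  qed
qed

lemma domA: "\<forall>j<n. eA j \<in> fst ` Mseq n"
proof (induction n)
  case 0 then show ?case by simp
next
  case (Suc n)
  have sub: "fst ` Mseq n \<subseteq> fst ` Mseq (Suc n)" using Mseq_step by auto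
  have "eA n \<in> fst ` Mseq (Suc n)"
  proof (cases "eA n \<in> fst ` Mseq n")
    case True then show ?thesis using sub by auto
  next
    case False
    have "(LEAST i. eA i \<notin> fst ` Mseq n) = n"
      by (rule Least_equality) (use False Suc.IH in \<open>auto simp: not_less[symmetric]\<close>)
    then have "eA n \<in> fst ` fstep n (Mseq n)" using fstep(4)[OF Mseq_inv, of n n] by simp
    moreover have "fstep n (Mseq n) \<subseteq> Mseq (Suc n)"
      using bstep(2)[OF fstep(1)[OF Mseq_inv]] by simp
    ultimately show ?thesis by auto
  qed
  then show ?case using Suc.IH sub less_Suc_eq by auto
qed

lemma domB: "\<forall>j<n. eB j \<in> snd ` Mseq n"
proof (induction n)
  case 0 then show ?case by simp
next
  case (Suc n)
  have sub: "snd ` Mseq n \<subseteq> snd ` Mseq (Suc n)" using Mseq_step by auto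
  have sub2: "snd ` Mseq n \<subseteq> snd ` fstep n (Mseq n)" using fstep(2)[OF Mseq_inv] by auto
  have "eB n \<in> snd ` Mseq (Suc n)"
  proof (cases "eB n \<in> snd ` fstep n (Mseq n)")
    case True
    have "fstep n (Mseq n) \<subseteq> Mseq (Suc n)" using bstep(2)[OF fstep(1)[OF Mseq_inv]] by simp
    then show ?thesis using True by blast
  next
    case False
    have "(LEAST i. eB i \<notin> snd ` fstep n (Mseq n)) = n"
    proof (rule Least_equality)
      show "eB n \<notin> snd ` fstep n (Mseq n)" using False .
      fix y assume y: "eB y \<notin> snd ` fstep n (Mseq n)"
      show "n \<le> y"
      proof (rule ccontr)
        assume "\<not> n \<le> y" then have "eB y \<in> snd ` Mseq n" using Suc.IH by auto
        then show False using sub2 y by blast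
      qed
    qed
    then show ?thesis using bstep(4)[OF fstep(1)[OF Mseq_inv], of n n] by simp
  qed
  then show ?case using Suc.IH sub less_Suc_eq by auto
qed

definition "sig = (\<Union>n. Mseq n)"

lemma sig_fun: "(x,y) \<in> sig \<Longrightarrow> (x',y') \<in> sig \<Longrightarrow> (x = x') = (y = y')"
proof -
  assume "(x,y) \<in> sig" "(x',y') \<in> sig"
  then obtain m n where "(x,y) \<in> Mseq m" "(x',y') \<in> Mseq n" unfolding sig_def by auto
  then have "(x,y) \<in> Mseq (max m n)" "(x',y') \<in> Mseq (max m n)" using Mseq_mono by (meson max.cobounded1 max.cobounded2 subsetD)+
  then show ?thesis using Mseq_inv[of "max m n"] unfolding inv_rel_def by blast
qed

lemma sig_sub: "sig \<subseteq> Q \<times> Q'" using Mseq_inv unfolding sig_def inv_rel_def by blast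

lemma sig_domA: "x \<in> Q \<Longrightarrow> \<exists>y. (x,y) \<in> sig"
proof -
  assume "x \<in> Q"
  then obtain j where "x = eA j" using eA by (metis bij_betw_imp_surj_on imageE)
  moreover have "eA j \<in> fst ` Mseq (Suc j)" using domA[of "Suc j"] by simp
  then obtain y where "(eA j, y) \<in> Mseq (Suc j)" by force
  ultimately show ?thesis unfolding sig_def by blast
qed

lemma sig_domB: "y \<in> Q' \<Longrightarrow> \<exists>x. (x,y) \<in> sig"
proof -
  assume "y \<in> Q'"
  then obtain j where "y = eB j" using eB by (metis bij_betw_imp_surj_on imageE)
  moreover have "eB j \<in> snd ` Mseq (Suc j)" using domB[of "Suc j"] by simp
  then obtain x where "(x, eB j) \<in> Mseq (Suc j)" by force
  ultimately show ?thesis unfolding sig_def by blast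
qed

lemma sig_tail: "(a,b) \<in> sig \<Longrightarrow> (a,b) \<notin> Mseq N \<Longrightarrow> Cl N a b"
proof -
  have "\<And>n. (a,b) \<in> Mseq n \<Longrightarrow> (a,b) \<notin> Mseq N \<Longrightarrow> Cl N a b"
  proof -
    fix n show "(a,b) \<in> Mseq n \<Longrightarrow> (a,b) \<notin> Mseq N \<Longrightarrow> Cl N a b"
    proof (induction n)
      case 0 then show ?case using Mseq_mono[of 0 N] by auto
    next
      case (Suc n)
      show ?case
      proof (cases "(a,b) \<in> Mseq n")
        case True then show ?thesis using Suc by auto
      next
        case False
        then have c: "Cl n a b" using Mseq_new[of "(a,b)" n] Suc.prems by auto
        have "N \<le> n"
        proof (rule ccontr)
          assume "\<not> N \<le> n" then have "Suc n \<le> N" by simp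
          then show False using Mseq_mono Suc.prems by blast
        qed
        then have "1 / real (Suc n) \<le> 1 / real (Suc N)" by (simp add: frac_le)
        then show ?thesis using c unfolding Cl_def by linarith
      qed
    qed
  qed
  then show "(a,b) \<in> sig \<Longrightarrow> (a,b) \<notin> Mseq N \<Longrightarrow> Cl N a b" unfolding sig_def by blast
qed

end



context ppair begin

definition "sg x = (SOME y. (x,y) \<in> sig)"

lemma sg: "x \<in> Q \<Longrightarrow> (x, sg x) \<in> sig"
  unfolding sg_def using sig_domA by (metis someI_ex)

lemma sg_eq: "(x,y) \<in> sig \<Longrightarrow> sg x = y"
proof -
  assume xy: "(x,y) \<in> sig"
  then have "x \<in> Q" using sig_sub by auto
  then show ?thesis using sg sig_fun xy by blast
qed

lemma sgQ: "x \<in> Q \<Longrightarrow> sg x \<in> Q'" using sg sig_sub by blast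

lemma sg_inj: "inj_on sg Q"
  by (rule inj_onI) (metis sg sig_fun)

lemma sg_img: "sg ` Q = Q'"
proof
  show "sg ` Q \<subseteq> Q'" using sgQ by auto
  show "Q' \<subseteq> sg ` Q"
  proof
    fix y assume "y \<in> Q'"
    then obtain x where "(x,y) \<in> sig" using sig_domB by blast
    then show "y \<in> sg ` Q" using sg_eq sig_sub by (metis SigmaD1 image_eqI subsetD)
  qed
qed

definition "g x = (if x \<in> A.K then h x else sg x)"

lemma g_cont: "continuous_on S g"
proof -
  have "continuous (at x within S) g" if xS: "x \<in> S" for x
  proof (cases "x \<in> Q")
    case True
    then obtain e where e: "e > 0" "\<forall>y\<in>S. dist y x < e \<longrightarrow> y = x" using A.iso by blast
    show ?thesis unfolding continuous_within_eps_delta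
      using e by (metis dist_self)
  next
    case False
    then have xK: "x \<in> A.K" using xS A.K_def by auto
    show ?thesis unfolding continuous_within_eps_delta
    proof (intro allI impI)
      fix \<epsilon> :: real assume "\<epsilon> > 0"
      then have e3: "\<epsilon>/3 > 0" by simp
      have "continuous (at x within A.K) h" using hK(2) xK continuous_on_eq_continuous_within by blast
      then obtain d1 where d1: "d1 > 0" "\<forall>z\<in>A.K. dist z x < d1 \<longrightarrow> dist (h z) (h x) < \<epsilon>/3"
        using e3 unfolding continuous_within_eps_delta by blast
      obtain N where N: "1 / real (Suc N) < \<epsilon>/3"
        using e3 by (metis nat_approx_posE)
      define Bb where "Bb = {b\<in>Q'. \<epsilon>/3 \<le> dist b (B.r b)}"
      have fBb: "finite Bb" unfolding Bb_def using B.fin_far_r[OF e3] .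
      define F where "F = fst ` Mseq N \<union> (sg -` Bb \<inter> Q)"
      have fF: "finite F" unfolding F_def using Mseq_inv[of N] fBb sg_inj
        by (auto simp: inv_rel_def intro: finite_vimage_IntI)
      have xF: "x \<notin> F" using False Mseq_inv[of N] unfolding F_def inv_rel_def by auto
      obtain d where d0: "d > 0" "\<forall>y\<in>F. y \<noteq> x \<longrightarrow> d \<le> dist x y"
        using finite_set_avoid[OF fF, of x] by auto
      then have d: "d > 0" "\<forall>y\<in>F. d \<le> dist x y" using xF by auto
      show "\<exists>\<delta>>0. \<forall>y\<in>S. dist y x < \<delta> \<longrightarrow> dist (g y) (g x) < \<epsilon>"
      proof (intro exI[of _ "min (d1/2) d"] conjI ballI impI)
        show "min (d1/2) d > 0" using d d1 by simp
        fix y assume yS: "y \<in> S" and dy: "dist y x < min (d1/2) d"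
        show "dist (g y) (g x) < \<epsilon>"
        proof (cases "y \<in> A.K")
          case True
          then have "dist (h y) (h x) < \<epsilon>/3" using d1 dy by auto
          then show ?thesis using True xK \<open>\<epsilon> > 0\<close> unfolding g_def by auto
        next
          case False
          then have yQ: "y \<in> Q" using yS A.K_def by auto
          have yF: "y \<notin> F" using d dy by (metis dist_commute min_less_iff_conj not_le)
          define b where "b = sg y"
          have yb: "(y,b) \<in> sig" using sg[OF yQ] b_def by simp
          have ybN: "(y,b) \<notin> Mseq N" using yF unfolding F_def by force
          have c1: "dist (h (A.r y)) (B.r b) < \<epsilon>/3" using sig_tail[OF yb ybN] N unfolding Cl_def by linarith
          have bQ: "b \<in> Q'" using sgQ[OF yQ] b_def by simp
          have "b \<notin> Bb" using yF yQ unfolding F_def b_def by auto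
          then have c2: "dist b (B.r b) < \<epsilon>/3" using bQ unfolding Bb_def by auto
          have "dist (A.r y) x \<le> dist (A.r y) y + dist y x" by (rule dist_triangle)
          also have "dist (A.r y) y \<le> dist y x" using A.r(2)[OF xK, of y] by (simp add: dist_commute)
          finally have "dist (A.r y) x < d1" using dy by simp
          then have c3: "dist (h (A.r y)) (h x) < \<epsilon>/3" using d1 A.r(1) by blast
          have "dist b (h x) \<le> dist b (B.r b) + dist (B.r b) (h (A.r y)) + dist (h (A.r y)) (h x)"
            by (metis add.commute add_left_mono dist_triangle order_trans)
          then have "dist b (h x) < \<epsilon>" using c1 c2 c3 by (simp add: dist_commute)
          then show ?thesis unfolding g_def using False xK b_def by simp
        qed
      qed
    qed
  qed
  then show ?thesis using continuous_on_eq_continuous_within by blast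
qed

lemma g_img: "g ` S = S'" "g ` A.K = B.K"
proof -
  have gK: "g ` A.K = B.K" unfolding g_def using hK(1) by (simp add: image_def)
  have gQ: "g ` Q = Q'" unfolding g_def using sg_img A.K_def by (auto simp: image_def)
  have "S = A.K \<union> Q" using A.K_def A.QS by auto
  moreover have "S' = B.K \<union> Q'" using B.K_def B.QS by auto
  ultimately show "g ` S = S'" using gK gQ by (metis image_Un)
  show "g ` A.K = B.K" by (rule gK)
qed

lemma g_inj: "inj_on g S"
proof (rule inj_onI)
  fix x y assume x: "x \<in> S" and y: "y \<in> S" and e: "g x = g y"
  have injh: "inj_on h A.K" using hK(5) by (metis inj_on_inverseI)
  show "x = y"
  proof (cases "x \<in> A.K"; cases "y \<in> A.K")
    assume "x \<in> A.K" "y \<in> A.K" then show ?thesis using e injh unfolding g_def by (auto dest: inj_onD)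
  next
    assume a: "x \<in> A.K" "y \<notin> A.K"
    then have "g x \<in> B.K" "g y \<in> Q'" using hK(1) sgQ y A.K_def unfolding g_def by auto
    then show ?thesis using e B.K_def by auto
  next
    assume a: "x \<notin> A.K" "y \<in> A.K"
    then have "g y \<in> B.K" "g x \<in> Q'" using hK(1) sgQ x A.K_def unfolding g_def by auto
    then show ?thesis using e B.K_def by auto
  next
    assume a: "x \<notin> A.K" "y \<notin> A.K"
    then show ?thesis using e sg_inj x y A.K_def unfolding g_def by (auto dest: inj_onD)
  qed
qed

lemma main: "\<exists>g g'. homeomorphism S S' g g' \<and> g ` A.K = B.K \<and> g a0 = a0'"
proof -
  obtain g' where "homeomorphism S S' g g'"
    using homeomorphism_compact[OF A.cS g_cont g_img(1) g_inj] by blast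
  moreover have "g a0 = a0'"
  proof -
    have "(a0, a0') \<in> sig" unfolding sig_def using Mseq.simps(1) by blast
    then show ?thesis using sg_eq a0 A.K_def unfolding g_def by auto
  qed
  ultimately show ?thesis using g_img(2) by blast
qed

end



lemma embed_pext:
  fixes Y :: "'a topology" and X :: "'c topology"
  assumes pe: "peripheral_extension X Y P" and Xne: "topspace X \<noteq> {}"
  obtains e :: "'a \<Rightarrow> (nat \<Rightarrow> real)" where
    "homeomorphic_map Y (top_of_set (e ` topspace Y)) e"
    "pext (e ` topspace Y) (e ` P)"
    "top_of_set (e ` topspace Y - e ` P) homeomorphic_space X"
proof -
  note pe' = pe[unfolded peripheral_extension_def]
  have "metrizable_space Y" using pe' by blast
  then obtain M d where md: "Metric_space M d" "Y = Metric_space.mtopology M d"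
    unfolding metrizable_space_def by blast
  interpret Metric_space M d by (rule md(1))
  have tY: "topspace Y = M" using md(2) by simp
  obtain en0 :: "'a \<Rightarrow> nat" where en0: "bij_betw en0 P UNIV"
  proof -
    have "countable P" "infinite P" using pe' by blast+
    then show ?thesis using countableE_infinite that by blast
  qed
  define en where "en = inv_into P en0"
  have en: "bij_betw en UNIV P" unfolding en_def using en0 by (rule bij_betw_inv_into)
  define e where "e y = (\<lambda>n. d y (en n))" for y
  have PM: "P \<subseteq> M" using pe' tY by auto
  have enM: "en n \<in> M" for n
  proof -
    have "en n \<in> P" by (rule bij_betw_apply[OF en]) simp
    then show ?thesis using PM by blast
  qed
  have conte: "continuous_map Y euclidean e"
  proof -
    have "continuous_map Y euclideanreal (\<lambda>y. d y (en n))" for n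
    proof -
      have "continuous_map Y euclideanreal (\<lambda>y. mdist (metric (M,d)) (id y) ((\<lambda>_. en n) y))"
        by (intro continuous_map_mdist) (auto simp: md(2) enM)
      then show ?thesis by simp
    qed
    then have "continuous_map Y (product_topology (\<lambda>_. euclideanreal) UNIV) e"
      unfolding continuous_map_componentwise_UNIV e_def by simp
    then show ?thesis by (simp add: euclidean_product_topology)
  qed
  have dense: "\<forall>r>0. \<exists>p\<in>P. d y p < r" if "y \<in> M" for y
  proof -
    have "Y closure_of P = topspace Y" using pe' by blast
    then have "y \<in> Y closure_of P" using that tY by simp
    then show ?thesis using md(2) metric_closure_of by (auto simp: in_mball)
  qed
  have inje: "inj_on e (topspace Y)"
  proof (rule inj_onI)
    fix y z assume y: "y \<in> topspace Y" and z: "z \<in> topspace Y" and ez: "e y = e z"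
    show "y = z"
    proof (rule ccontr)
      assume "y \<noteq> z"
      then have r: "d y z > 0" using y z tY by simp
      then have "d y z / 2 > 0" by simp
      moreover have "y \<in> M" using y tY by simp
      ultimately obtain p where p: "p \<in> P" "d y p < d y z / 2" using dense by blast
      obtain n where "p = en n" using en p(1) by (metis bij_betw_imp_surj_on imageE)
      then have "d y p = d z p" using fun_cong[OF ez, of n] unfolding e_def by simp
      moreover have "d y z \<le> d y p + d p z" using y z p PM tY triangle by auto
      ultimately show False using p(2) commute[of p z] by linarith
    qed
  qed
  have cY: "compact_space Y" using pe' by simp
  have emb: "embedding_map Y euclidean e"
    by (rule injective_closed_imp_embedding_map[OF conte _ inje])
       (rule continuous_imp_closed_map[OF conte cY], simp)
  define S where "S = e ` topspace Y"
  have hom: "homeomorphic_map Y (top_of_set S) e" using emb unfolding embedding_map_def S_def by simp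
  have cS: "compact S" unfolding S_def
    using image_compactin[OF _ conte, of "topspace Y"] cY compact_space_def compactin_euclidean_iff by blast
  have PY: "P \<subseteq> topspace Y" using pe' by simp
  have injP: "inj_on e P" using inje PY inj_on_subset by blast
  have iso: "\<exists>\<epsilon>>0. \<forall>y\<in>S. dist y q < \<epsilon> \<longrightarrow> y = q" if q: "q \<in> e ` P" for q
  proof -
    obtain p where p: "p \<in> P" "q = e p" using q by blast
    have "openin (subtopology Y P) {p}" using pe' p(1) by simp
    then obtain U where U: "openin Y U" "{p} = U \<inter> P" unfolding openin_subtopology by blast
    have "openin Y {p}" using U pe' by (metis openin_Int)
    moreover have "openin (top_of_set S) (e ` {p}) = openin Y {p}"
      by (rule homeomorphic_map_openness[OF hom]) (use p PY in auto)
    ultimately have "openin (top_of_set S) (e ` {p})" by simp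
    then obtain T where T: "open T" "{q} = S \<inter> T" using p by (auto simp: openin_open)
    then have "q \<in> T" by auto
    then obtain \<epsilon> where "\<epsilon> > 0" "ball q \<epsilon> \<subseteq> T" using T(1) open_contains_ball by blast
    then show ?thesis using T(2) by (intro exI[of _ \<epsilon>]) (metis IntI dist_commute mem_ball singletonD subsetD)
  qed
  have clo: "S \<subseteq> closure (e ` P)"
  proof -
    have "(top_of_set S) closure_of (e ` P) = e ` (Y closure_of P)"
      using homeomorphic_map_closure_of[OF hom PY] .
    also have "\<dots> = S" using pe' S_def by simp
    finally have "S \<inter> closure (S \<inter> e ` P) = S" by (simp add: closure_of_subtopology)
    then show ?thesis by (metis closure_mono inf.cobounded2 inf.orderI le_inf_iff order_trans)
  qed
  have Kh: "top_of_set (S - e ` P) homeomorphic_space X"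
  proof -
    have "e ` (topspace Y \<inter> (topspace Y - P)) = topspace (top_of_set S) \<inter> (S - e ` P)"
      using inj_on_image_set_diff[OF inje, of "topspace Y" P] PY unfolding S_def by auto
    then have "homeomorphic_map (subtopology Y (topspace Y - P)) (subtopology (top_of_set S) (S - e ` P)) e"
      by (rule homeomorphic_map_subtopologies[OF hom])
    then have "subtopology Y (topspace Y - P) homeomorphic_space top_of_set (S - e ` P)"
      by (metis Diff_subset homeomorphic_map_maps homeomorphic_space_def subtopology_subtopology inf.absorb2)
    then show ?thesis using pe' homeomorphic_space_sym homeomorphic_space_trans by blast
  qed
  have Kne: "S - e ` P \<noteq> {}"
  proof
    assume K0: "S - e ` P = {}"
    obtain f g where "homeomorphic_maps (top_of_set (S - e ` P)) X f g"
      using Kh unfolding homeomorphic_space_def by blast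
    then have "continuous_map X (top_of_set (S - e ` P)) g" unfolding homeomorphic_maps_def by blast
    then have "g ` topspace X \<subseteq> S - e ` P" using continuous_map_image_subset_topspace by fastforce
    then show False using K0 Xne by blast
  qed
  have "pext S (e ` P)"
  proof
    show "compact S" by (rule cS)
    show "e ` P \<subseteq> S" using PY S_def by auto
    show "\<And>q. q \<in> e ` P \<Longrightarrow> \<exists>e>0. \<forall>y\<in>S. dist y q < e \<longrightarrow> y = q" using iso by blast
    show "\<exists>q\<in>e ` P. dist q x < \<eta>" if "x \<in> S - e ` P" "\<eta> > 0" for x \<eta>
      using clo that closure_approachable by blast
    show "countable (e ` P)" using pe' by simp
    show "infinite (e ` P)" using pe' injP finite_image_iff by blast
    show "S - e ` P \<noteq> {}" by (rule Kne)
  qed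
  then show ?thesis using that hom Kh unfolding S_def by blast
qed




lemma homeomorphism_maps_iff:
  "homeomorphism S T g g' \<longleftrightarrow> homeomorphic_maps (top_of_set S) (top_of_set T) g g'"
  unfolding homeomorphism_def homeomorphic_maps_def continuous_map_subtopology_eu
  by (auto simp: Pi_iff image_subset_iff) (metis image_eqI)+

lemma pext_homeo:
  fixes Y :: "'a topology" and Y' :: "'b topology" and X :: "'c topology"
  assumes pe: "peripheral_extension X Y P" and pe': "peripheral_extension X Y' P'"
    and Xne: "topspace X \<noteq> {}" and p: "p \<in> P" and p': "p' \<in> P'"
  shows "\<exists>f. homeomorphic_map Y Y' f \<and> f ` (topspace Y - P) = topspace Y' - P' \<and> f p = p'"
proof -
  obtain e :: "'a \<Rightarrow> nat \<Rightarrow> real" where e1: "homeomorphic_map Y (top_of_set (e ` topspace Y)) e"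
    and e2: "pext (e ` topspace Y) (e ` P)" and e3: "top_of_set (e ` topspace Y - e ` P) homeomorphic_space X"
    using embed_pext[OF pe Xne] by blast
  obtain e' :: "'b \<Rightarrow> nat \<Rightarrow> real" where e1': "homeomorphic_map Y' (top_of_set (e' ` topspace Y')) e'"
    and e2': "pext (e' ` topspace Y') (e' ` P')" and e3': "top_of_set (e' ` topspace Y' - e' ` P') homeomorphic_space X"
    using embed_pext[OF pe' Xne] by blast
  define S where "S = e ` topspace Y"
  define Q where "Q = e ` P"
  define S' where "S' = e' ` topspace Y'"
  define Q' where "Q' = e' ` P'"
  have "top_of_set (S - Q) homeomorphic_space top_of_set (S' - Q')"
    using e3 e3' homeomorphic_space_sym homeomorphic_space_trans unfolding S_def Q_def S'_def Q'_def by blast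
  then obtain h h' where "homeomorphic_maps (top_of_set (S - Q)) (top_of_set (S' - Q')) h h'"
    unfolding homeomorphic_space_def by blast
  then have hom: "homeomorphism (S - Q) (S' - Q') h h'" by (simp add: homeomorphism_maps_iff)
  have PY: "P \<subseteq> topspace Y" "P' \<subseteq> topspace Y'" using pe pe' unfolding peripheral_extension_def by auto
  have pp: "ppair S Q S' Q' h h' (e p) (e' p')"
    unfolding ppair_def ppair_axioms_def
    using e2 e2' hom p p' pext.K_def[OF e2] pext.K_def[OF e2']
    unfolding S_def Q_def S'_def Q'_def by auto
  obtain g g' where g: "homeomorphism S S' g g'" "g ` (S - Q) = S' - Q'" "g (e p) = e' p'"
    using ppair.main[OF pp] pext.K_def[OF e2] pext.K_def[OF e2'] unfolding S_def Q_def S'_def Q'_def by auto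
  have gm: "homeomorphic_map (top_of_set S) (top_of_set S') g"
    using g(1) unfolding homeomorphism_maps_iff homeomorphic_map_maps by blast
  obtain e'' where e'': "homeomorphic_maps Y' (top_of_set S') e' e''"
    using e1' unfolding homeomorphic_map_maps S'_def by blast
  then have e''m: "homeomorphic_map (top_of_set S') Y' e''" and e''i: "\<And>x. x \<in> topspace Y' \<Longrightarrow> e'' (e' x) = x"
    unfolding homeomorphic_maps_map by auto
  define f where "f = e'' \<circ> (g \<circ> e)"
  have fm: "homeomorphic_map Y Y' f" unfolding f_def
    by (rule homeomorphic_map_compose[OF homeomorphic_map_compose[OF e1[folded S_def] gm] e''m])
  have inje: "inj_on e (topspace Y)" using homeomorphic_imp_injective_map[OF e1] .
  have inje': "inj_on e' (topspace Y')" using homeomorphic_imp_injective_map[OF e1'] .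
  have "e ` (topspace Y - P) = S - Q"
    unfolding S_def Q_def using inj_on_image_set_diff[OF inje, of "topspace Y" P] PY by auto
  moreover have "e' ` (topspace Y' - P') = S' - Q'"
    unfolding S'_def Q'_def using inj_on_image_set_diff[OF inje', of "topspace Y'" P'] PY by auto
  moreover have "e'' ` e' ` (topspace Y' - P') = topspace Y' - P'"
  proof -
    have "(\<lambda>x. e'' (e' x)) ` (topspace Y' - P') = (\<lambda>x. x) ` (topspace Y' - P')"
      by (rule image_cong) (auto simp: e''i)
    then show ?thesis by (simp add: image_image)
  qed
  ultimately have "f ` (topspace Y - P) = topspace Y' - P'"
  proof -
    assume a1: "e ` (topspace Y - P) = S - Q" and a2: "e' ` (topspace Y' - P') = S' - Q'"
      and a3: "e'' ` e' ` (topspace Y' - P') = topspace Y' - P'"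
    have "f ` (topspace Y - P) = e'' ` (g ` (e ` (topspace Y - P)))" unfolding f_def image_comp ..
    also have "\<dots> = e'' ` (S' - Q')" using a1 g(2) by simp
    also have "\<dots> = topspace Y' - P'" using a2 a3 by simp
    finally show ?thesis .
  qed
  moreover have "f p = p'"
  proof -
    have "f p = e'' (e' p')" unfolding f_def using g(3) by simp
    also have "\<dots> = p'" using e''i p' PY(2) by blast
    finally show ?thesis .
  qed
  ultimately show ?thesis using fm by blast
qed




lemma succ_upt:
  assumes "\<And>i. a \<le> i \<Longrightarrow> Suc i < b \<Longrightarrow> P (f i) (f (Suc i))"
  shows "successively P (map f [a..<b])"
  unfolding successively_conv_nth
proof (intro allI impI)
  fix i assume "Suc i < length (map f [a..<b])"
  then have "Suc (a + i) < b" by simp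
  then show "P (map f [a..<b] ! i) (map f [a..<b] ! Suc i)"
    using assms[of "a+i"] by (simp add: nth_upt)
qed

locale tctx =
  fixes V :: "'v set" and E :: "('v \<times> 'v) set" and r :: 'v
  assumes tree: "countable_inf_valence_tree V E" and rV: "r \<in> V"
begin

lemma EV: "E \<subseteq> V \<times> V" and sym: "(x,y) \<in> E \<Longrightarrow> (y,x) \<in> E" and irr: "(x,x) \<notin> E"
  and conn: "x \<in> V \<Longrightarrow> y \<in> V \<Longrightarrow> (x,y) \<in> E\<^sup>*"
  and nocyc: "\<not> (\<exists>xs. 3 \<le> length xs \<and> distinct xs \<and>
            (\<forall>i. Suc i < length xs \<longrightarrow> (xs ! i, xs ! Suc i) \<in> E) \<and>
            (last xs, hd xs) \<in> E)"
  using tree unfolding countable_inf_valence_tree_def is_tree_def by blast+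

definition "dep v = (LEAST n. (r,v) \<in> E ^^ n)"

lemma dep: "v \<in> V \<Longrightarrow> (r,v) \<in> E ^^ dep v"
proof -
  assume "v \<in> V"
  have "\<exists>n. (r,v) \<in> E ^^ n" using conn[OF rV \<open>v \<in> V\<close>] by (simp add: rtrancl_power)
  then show ?thesis unfolding dep_def by (rule LeastI_ex)
qed

lemma dep_le: "(r,v) \<in> E ^^ n \<Longrightarrow> dep v \<le> n"
  unfolding dep_def by (rule Least_le)

lemma dep_r: "dep r = 0"
  using dep_le[of r 0] by simp

lemma dep0: "v \<in> V \<Longrightarrow> dep v = 0 \<Longrightarrow> v = r"
proof -
  assume "v \<in> V" "dep v = 0"
  then have "(r,v) \<in> E ^^ 0" using dep[of v] by simp
  then show "v = r" by simp
qed

lemma dep_edge: "(u,w) \<in> E \<Longrightarrow> dep w \<le> Suc (dep u)"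
proof -
  assume uw: "(u,w) \<in> E"
  then have "u \<in> V" using EV by auto
  then have "(r,w) \<in> E ^^ Suc (dep u)" using relpow_Suc_I[OF dep[of u] uw] by simp
  then show ?thesis by (rule dep_le)
qed

definition "walk p n \<longleftrightarrow> (\<forall>i<n. (p i, p (Suc i)) \<in> E)"

lemma geod:
  assumes "v \<in> V"
  obtains p where "p 0 = r" "p (dep v) = v" "walk p (dep v)" "\<And>i. i \<le> dep v \<Longrightarrow> dep (p i) = i"
proof -
  obtain p where p: "p 0 = r" "p (dep v) = v" "walk p (dep v)"
    using dep[OF assms] unfolding relpow_fun_conv walk_def by blast
  have "dep (p i) = i" if i: "i \<le> dep v" for i
  proof -
    have "(r, p i) \<in> E ^^ i" unfolding relpow_fun_conv
      using p i unfolding walk_def by (intro exI[of _ p]) auto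
    then have le: "dep (p i) \<le> i" by (rule dep_le)
    have seg: "(p i, v) \<in> E ^^ (dep v - i)" unfolding relpow_fun_conv
      using p i unfolding walk_def by (intro exI[of _ "\<lambda>j. p (i + j)"]) auto
    have "p i \<in> V"
    proof (cases i)
      case 0 then show ?thesis using p rV by simp
    next
      case (Suc j) then have "(p j, p i) \<in> E" using p(3) i unfolding walk_def by auto
      then show ?thesis using EV by auto
    qed
    then have "(r, v) \<in> E ^^ (dep (p i) + (dep v - i))" using dep seg relpow_add by blast
    then have "dep v \<le> dep (p i) + (dep v - i)" by (rule dep_le)
    then show ?thesis using le i by linarith
  qed
  then show ?thesis using that p by blast
qed

lemma cyc:
  assumes p1: "\<And>i. i \<le> m \<Longrightarrow> dep (p1 i) = i" "walk p1 m"
    and p2: "\<And>i. i \<le> m \<Longrightarrow> dep (p2 i) = i" "walk p2 m"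
    and km: "k < m" and pk: "p1 k = p2 k" and dif: "\<And>i. k < i \<Longrightarrow> i \<le> m \<Longrightarrow> p1 i \<noteq> p2 i"
    and ws: "distinct ws" "\<And>w. w \<in> set ws \<Longrightarrow> m < dep w"
    and ch: "successively (\<lambda>x y. (x,y) \<in> E) (p1 m # ws @ [p2 m])"
  shows False
proof -
  let ?E = "\<lambda>x y. (x,y) \<in> E"
  define A where "A = map p1 [k..<m]"
  define C where "C = rev (map p2 [Suc k..<m])"
  define B where "B = p1 m # ws @ [p2 m]"
  define xs where "xs = A @ B @ C"
  have sA: "successively ?E A" unfolding A_def
    by (rule succ_upt) (use p1(2) in \<open>auto simp: walk_def\<close>)
  have sC: "successively ?E C" unfolding C_def successively_rev
    by (rule succ_upt) (use p2(2) sym in \<open>auto simp: walk_def\<close>)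
  have A0: "A \<noteq> []" unfolding A_def using km by simp
  have lastA: "last A = p1 (m - 1)" unfolding A_def using km
    by (simp add: last_map)
  have jAB: "?E (last A) (hd B)" unfolding lastA B_def using p1(2) km unfolding walk_def
    by (metis Suc_pred' diff_less less_nat_zero_code list.sel(1) not_gr_zero zero_less_one)
  have jBC: "C = [] \<or> ?E (last B) (hd C)"
  proof (cases "Suc k < m")
    case True
    then have "hd C = p2 (m - 1)" unfolding C_def by (simp add: hd_rev last_map)
    moreover have "(p2 (m-1), p2 m) \<in> E" using p2(2) km unfolding walk_def
      by (metis Suc_pred' diff_less less_nat_zero_code not_gr_zero zero_less_one)
    ultimately show ?thesis unfolding B_def using sym by auto
  qed (simp add: C_def)
  have sBC: "successively ?E (B @ C)" unfolding successively_append_iff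
    using ch sC jBC by (simp add: B_def)
  have hB: "hd (B @ C) = hd B" "B @ C \<noteq> []" by (simp_all add: B_def)
  have sxs: "successively ?E xs" unfolding xs_def
    using successively_append_iff[of ?E A "B @ C"] sA sBC jAB hB by simp
  have hdxs: "hd xs = p1 k" unfolding xs_def A_def using km by (simp add: upt_conv_Cons)
  have lastxs: "last xs = p2 (Suc k)"
  proof (cases "Suc k < m")
    case True then show ?thesis unfolding xs_def C_def by (simp add: last_rev upt_conv_Cons)
  next
    case False then have "m = Suc k" using km by simp
    then show ?thesis unfolding xs_def C_def B_def by simp
  qed
  have close: "(last xs, hd xs) \<in> E" unfolding lastxs hdxs pk
    using p2(2) km sym unfolding walk_def by blast
  have len: "3 \<le> length xs" unfolding xs_def A_def B_def C_def using km by simp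
  have injp1: "inj_on p1 {..m}" by (rule inj_onI) (metis p1(1) atMost_iff)
  have injp2: "inj_on p2 {..m}" by (rule inj_onI) (metis p2(1) atMost_iff)
  have "inj_on p1 (set [k..<Suc m])" by (rule inj_on_subset[OF injp1]) auto
  then have dA: "distinct (map p1 [k..<Suc m])" by (simp add: distinct_map)
  have "inj_on p2 (set [Suc k..<Suc m])" by (rule inj_on_subset[OF injp2]) auto
  then have dC: "distinct (map p2 [Suc k..<Suc m])" by (simp add: distinct_map)
  have eq: "xs = map p1 [k..<Suc m] @ ws @ rev (map p2 [Suc k..<Suc m])"
    unfolding xs_def A_def B_def C_def using km by simp
  have disj1: "set (map p1 [k..<Suc m]) \<inter> set ws = {}" using p1(1) ws(2) by fastforce
  have disj2: "set (map p2 [Suc k..<Suc m]) \<inter> set ws = {}" using p2(1) ws(2) by fastforce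
  have disj3: "set (map p1 [k..<Suc m]) \<inter> set (map p2 [Suc k..<Suc m]) = {}"
  proof (rule ccontr)
    assume "set (map p1 [k..<Suc m]) \<inter> set (map p2 [Suc k..<Suc m]) \<noteq> {}"
    then obtain x where x1: "x \<in> p1 ` {k..<Suc m}" and x2: "x \<in> p2 ` {Suc k..<Suc m}"
      unfolding set_map set_upt by blast
    from x1 obtain i where i: "i \<in> {k..<Suc m}" "x = p1 i" by (rule imageE)
    from x2 obtain j where j: "j \<in> {Suc k..<Suc m}" "x = p2 j" by (rule imageE)
    have ij: "k \<le> i" "i \<le> m" "Suc k \<le> j" "j \<le> m" "p1 i = p2 j" using i j by auto
    then have "i = j" using p1(1) p2(1) by metis
    then show False using dif ij by auto
  qed
  have "distinct xs" unfolding eq using dA dC ws(1) disj1 disj2 disj3 by auto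
  then show False using nocyc len sxs close unfolding successively_conv_nth by blast
qed

lemma common_k:
  fixes m :: nat
  assumes "p1 0 = p2 0" "p1 m \<noteq> p2 m"
  obtains k where "k < m" "p1 k = p2 k" "\<And>i. k < i \<Longrightarrow> i \<le> m \<Longrightarrow> p1 i \<noteq> p2 i"
proof -
  define K where "K = {k. k \<le> m \<and> p1 k = p2 k}"
  have "finite K" "0 \<in> K" unfolding K_def using assms by auto
  then have "Max K \<in> K" "\<And>i. i \<in> K \<Longrightarrow> i \<le> Max K" by (auto intro: Max_in)
  then show ?thesis using that[of "Max K"] assms unfolding K_def
    by (metis (mono_tags, lifting) le_neq_implies_less mem_Collect_eq not_le)
qed

lemma edge_dep_neq:
  assumes "(a,b) \<in> E" shows "dep a \<noteq> dep b"
proof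
  assume eq: "dep a = dep b"
  have V: "a \<in> V" "b \<in> V" using assms EV by auto
  obtain p1 where p1: "p1 0 = r" "p1 (dep a) = a" "walk p1 (dep a)" "\<And>i. i \<le> dep a \<Longrightarrow> dep (p1 i) = i"
    using geod[OF V(1)] by blast
  obtain p2 where p2: "p2 0 = r" "p2 (dep b) = b" "walk p2 (dep b)" "\<And>i. i \<le> dep b \<Longrightarrow> dep (p2 i) = i"
    using geod[OF V(2)] by blast
  have "a \<noteq> b" using assms irr by auto
  then obtain k where k: "k < dep a" "p1 k = p2 k" "\<And>i. k < i \<Longrightarrow> i \<le> dep a \<Longrightarrow> p1 i \<noteq> p2 i"
    using common_k[of p1 p2 "dep a"] p1 p2 eq by metis
  show False
    by (rule cyc[of "dep a" p1 p2 k "[]"]) (use p1 p2 eq k assms in auto)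
qed

lemma lower_unique:
  assumes "(v,u1) \<in> E" "(v,u2) \<in> E" "dep u1 < dep v" "dep u2 < dep v"
  shows "u1 = u2"
proof (rule ccontr)
  assume ne: "u1 \<noteq> u2"
  have V: "u1 \<in> V" "u2 \<in> V" using assms EV by auto
  have d1: "dep v = Suc (dep u1)" using dep_edge[OF assms(1)] dep_edge[OF sym[OF assms(1)]] assms(3) by linarith
  have d2: "dep v = Suc (dep u2)" using dep_edge[OF assms(2)] dep_edge[OF sym[OF assms(2)]] assms(4) by linarith
  define m where "m = dep u1"
  obtain p1 where p1: "p1 0 = r" "p1 (dep u1) = u1" "walk p1 (dep u1)" "\<And>i. i \<le> dep u1 \<Longrightarrow> dep (p1 i) = i"
    using geod[OF V(1)] by blast
  obtain p2 where p2: "p2 0 = r" "p2 (dep u2) = u2" "walk p2 (dep u2)" "\<And>i. i \<le> dep u2 \<Longrightarrow> dep (p2 i) = i"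
    using geod[OF V(2)] by blast
  have eq: "dep u2 = m" using d1 d2 m_def by simp
  obtain k where k: "k < m" "p1 k = p2 k" "\<And>i. k < i \<Longrightarrow> i \<le> m \<Longrightarrow> p1 i \<noteq> p2 i"
    using common_k[of p1 p2 m] p1 p2 eq ne m_def by metis
  show False
    by (rule cyc[of m p1 p2 k "[v]"]) (use p1 p2 eq k assms d1 m_def sym in auto)
qed

definition "par v = (SOME u. (v,u) \<in> E \<and> dep u < dep v)"

lemma par:
  assumes "v \<in> V" "v \<noteq> r"
  shows "(v, par v) \<in> E" "Suc (dep (par v)) = dep v" "par v \<in> V"
proof -
  have "dep v \<noteq> 0" using dep0 assms by blast
  obtain p where p: "p 0 = r" "p (dep v) = v" "walk p (dep v)" "\<And>i. i \<le> dep v \<Longrightarrow> dep (p i) = i"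
    using geod[OF assms(1)] by blast
  have "(p (dep v - 1), v) \<in> E" using p \<open>dep v \<noteq> 0\<close> unfolding walk_def
    by (metis Suc_pred' diff_less less_numeral_extra(1) not_gr_zero)
  moreover have "dep (p (dep v - 1)) < dep v" using p(4)[of "dep v - 1"] \<open>dep v \<noteq> 0\<close> by simp
  ultimately have "\<exists>u. (v,u) \<in> E \<and> dep u < dep v" using sym by blast
  then have pp: "(v, par v) \<in> E \<and> dep (par v) < dep v" unfolding par_def by (rule someI_ex)
  then show "(v, par v) \<in> E" by simp
  show "Suc (dep (par v)) = dep v" using pp dep_edge[of "par v" v] sym by force
  show "par v \<in> V" using pp EV by auto
qed

lemma par_unique: "(v,u) \<in> E \<Longrightarrow> dep u < dep v \<Longrightarrow> u = par v"
proof -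
  assume a: "(v,u) \<in> E" "dep u < dep v"
  then have "v \<in> V" "v \<noteq> r" using EV dep_r by auto
  then show ?thesis using lower_unique[OF a(1) par(1)] a par(2) by force
qed

lemma edge_cases:
  assumes "(s,t) \<in> E"
  shows "(s \<noteq> r \<and> t = par s \<and> dep s = Suc (dep t)) \<or> (t \<noteq> r \<and> s = par t \<and> dep t = Suc (dep s))"
proof -
  have "dep s \<noteq> dep t" using edge_dep_neq[OF assms] .
  moreover have "dep t \<le> Suc (dep s)" "dep s \<le> Suc (dep t)" using dep_edge assms sym by blast+
  ultimately have "dep s = Suc (dep t) \<or> dep t = Suc (dep s)" by linarith
  then show ?thesis
  proof
    assume d: "dep s = Suc (dep t)"
    then have "t = par s" using par_unique[OF assms] by simp
    moreover have "s \<noteq> r" using d dep_r by auto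
    ultimately show ?thesis using d by blast
  next
    assume d: "dep t = Suc (dep s)"
    then have "s = par t" using par_unique[OF sym[OF assms]] by simp
    moreover have "t \<noteq> r" using d dep_r by auto
    ultimately show ?thesis using d by blast
  qed
qed

end



lemma hm_P:
  assumes "homeomorphic_map Y Y' g" "g ` (topspace Y - P) = topspace Y' - P'"
    "P \<subseteq> topspace Y" "P' \<subseteq> topspace Y'"
  shows "g ` P = P'"
proof -
  have s: "g ` topspace Y = topspace Y'" using homeomorphic_imp_surjective_map[OF assms(1)] .
  have i: "inj_on g (topspace Y)" using homeomorphic_imp_injective_map[OF assms(1)] .
  have "g ` (topspace Y - (topspace Y - P)) = g ` topspace Y - g ` (topspace Y - P)"
    by (rule inj_on_image_set_diff[OF i]) auto
  then show ?thesis using assms(2,3,4) s by (simp add: Diff_Diff_Int Int_absorb1 double_diff)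
qed

locale sys = tctx V E r for V :: "'v set" and E r +
  fixes X :: "'c topology" and Xdd :: "'v \<Rightarrow> 'a topology" and P b
    and Xdd' :: "'v \<Rightarrow> 'b topology" and P' b'
  assumes Xne: "topspace X \<noteq> {}" and ts: "tree_system V E X Xdd P b"
    and ts': "tree_system V E X Xdd' P' b'"
begin

lemma pe: "t \<in> V \<Longrightarrow> peripheral_extension X (Xdd t) (P t)"
  and bb: "t \<in> V \<Longrightarrow> bij_betw (b t) (out_edges E t) (P t)"
  and pe': "t \<in> V \<Longrightarrow> peripheral_extension X (Xdd' t) (P' t)"
  and bb': "t \<in> V \<Longrightarrow> bij_betw (b' t) (out_edges E t) (P' t)"
  using ts ts' unfolding tree_system_def by blast+

lemma PT: "t \<in> V \<Longrightarrow> P t \<subseteq> topspace (Xdd t)" "t \<in> V \<Longrightarrow> P' t \<subseteq> topspace (Xdd' t)"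
  using pe pe' unfolding peripheral_extension_def by blast+

definition "HM t t' p p' = (SOME g. homeomorphic_map (Xdd t) (Xdd' t') g \<and>
   g ` (topspace (Xdd t) - P t) = topspace (Xdd' t') - P' t' \<and> g p = p')"

lemma HM:
  assumes "t \<in> V" "t' \<in> V" "p \<in> P t" "p' \<in> P' t'"
  shows "homeomorphic_map (Xdd t) (Xdd' t') (HM t t' p p')"
    "HM t t' p p' ` (topspace (Xdd t) - P t) = topspace (Xdd' t') - P' t'"
    "HM t t' p p' p = p'"
proof -
  have "\<exists>g. homeomorphic_map (Xdd t) (Xdd' t') g \<and>
   g ` (topspace (Xdd t) - P t) = topspace (Xdd' t') - P' t' \<and> g p = p'"
    by (rule pext_homeo[OF pe[OF assms(1)] pe'[OF assms(2)] Xne assms(3,4)])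
  from someI_ex[OF this] show "homeomorphic_map (Xdd t) (Xdd' t') (HM t t' p p')"
    "HM t t' p p' ` (topspace (Xdd t) - P t) = topspace (Xdd' t') - P' t'"
    "HM t t' p p' p = p'" unfolding HM_def by blast+
qed

definition "p0 = (SOME p. p \<in> P r)"
definition "p0' = (SOME p. p \<in> P' r)"

lemma p0: "p0 \<in> P r" "p0' \<in> P' r"
proof -
  have "infinite (P r)" "infinite (P' r)" using pe[OF rV] pe'[OF rV] unfolding peripheral_extension_def by blast+
  then have "\<exists>p. p \<in> P r" "\<exists>p. p \<in> P' r" by (metis ex_in_conv finite.emptyI)+
  then show "p0 \<in> P r" "p0' \<in> P' r" unfolding p0_def p0'_def by (auto intro: someI_ex)
qed

primrec Lam where
  "Lam 0 v = (r, HM r r p0 p0')"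
| "Lam (Suc n) v = (let u = par v; lu = fst (Lam n u); fu = snd (Lam n u);
     lv = snd (inv_into (out_edges E lu) (b' lu) (fu (b u (u,v)))) in
     (lv, HM v lv (b v (v,u)) (b' lv (lv, lu))))"

definition "lam v = fst (Lam (dep v) v)"
definition "ff v = snd (Lam (dep v) v)"

lemma lam_r: "lam r = r" "ff r = HM r r p0 p0'"
  unfolding lam_def ff_def dep_r by simp_all

lemma lam_step:
  assumes "v \<in> V" "v \<noteq> r"
  shows "lam v = snd (inv_into (out_edges E (lam (par v))) (b' (lam (par v))) (ff (par v) (b (par v) (par v, v))))"
    "ff v = HM v (lam v) (b v (v, par v)) (b' (lam v) (lam v, lam (par v)))"
proof -
  have d: "dep v = Suc (dep (par v))" using par(2)[OF assms] by simp
  show "lam v = snd (inv_into (out_edges E (lam (par v))) (b' (lam (par v))) (ff (par v) (b (par v) (par v, v))))"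
    unfolding lam_def ff_def d by (simp add: Let_def)
  show "ff v = HM v (lam v) (b v (v, par v)) (b' (lam v) (lam v, lam (par v)))"
    unfolding lam_def ff_def d by (simp add: Let_def)
qed

definition "Cv v \<longleftrightarrow> lam v \<in> V \<and> homeomorphic_map (Xdd v) (Xdd' (lam v)) (ff v) \<and>
   ff v ` (topspace (Xdd v) - P v) = topspace (Xdd' (lam v)) - P' (lam v) \<and> dep (lam v) = dep v \<and>
   (v \<noteq> r \<longrightarrow> (lam (par v), lam v) \<in> E \<and> par (lam v) = lam (par v) \<and>
      ff v (b v (v, par v)) = b' (lam v) (lam v, lam (par v)) \<and>
      b' (lam (par v)) (lam (par v), lam v) = ff (par v) (b (par v) (par v, v)))"

lemma oe: "(t,s) \<in> E \<Longrightarrow> (t,s) \<in> out_edges E t" unfolding out_edges_def by simp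

lemma Cv_all: "\<forall>v\<in>V. dep v = n \<longrightarrow> Cv v"
proof (induction n)
  case 0
  show ?case
  proof (intro ballI impI)
    fix v assume "v \<in> V" "dep v = 0"
    then have v: "v = r" using dep0 by blast
    show "Cv v" unfolding v Cv_def lam_r using HM[OF rV rV p0] rV dep_r by simp
  qed
next
  case (Suc n)
  show ?case
  proof (intro ballI impI)
    fix v assume vV: "v \<in> V" and dv: "dep v = Suc n"
    then have vr: "v \<noteq> r" using dep_r by auto
    define u where "u = par v"
    have uV: "u \<in> V" and vu: "(v,u) \<in> E" and du: "Suc (dep u) = dep v"
      using par[OF vV vr] unfolding u_def by auto
    have uv: "(u,v) \<in> E" using sym[OF vu] .
    have Cu: "Cv u" using Suc.IH uV du dv by auto
    note Cu' = Cu[unfolded Cv_def]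
    have luV: "lam u \<in> V" using Cu' by blast
    have hu: "homeomorphic_map (Xdd u) (Xdd' (lam u)) (ff u)"
      "ff u ` (topspace (Xdd u) - P u) = topspace (Xdd' (lam u)) - P' (lam u)" using Cu' by blast+
    have fuP: "ff u ` P u = P' (lam u)"
      by (rule hm_P[OF hu PT(1)[OF uV] PT(2)[OF luV]])
    have injfu: "inj_on (ff u) (topspace (Xdd u))" using homeomorphic_imp_injective_map[OF hu(1)] .
    have buv: "b u (u,v) \<in> P u" using bij_betw_apply[OF bb[OF uV] oe[OF uv]] .
    define q where "q = ff u (b u (u,v))"
    have qP: "q \<in> P' (lam u)" using fuP buv q_def by blast
    define ed where "ed = inv_into (out_edges E (lam u)) (b' (lam u)) q"
    have qim: "q \<in> b' (lam u) ` out_edges E (lam u)" using qP bij_betw_imp_surj_on[OF bb'[OF luV]] by simp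
    have ed1: "ed \<in> out_edges E (lam u)" unfolding ed_def using inv_into_into[OF qim] .
    have ed2: "b' (lam u) ed = q" unfolding ed_def using f_inv_into_f[OF qim] .
    have lv: "lam v = snd ed" using lam_step(1)[OF vV vr] unfolding ed_def q_def u_def .
    have edeq: "ed = (lam u, lam v)" using ed1 lv unfolding out_edges_def by (cases ed) auto
    have E1: "(lam u, lam v) \<in> E" using ed1 edeq unfolding out_edges_def by simp
    have lvV: "lam v \<in> V" using E1 EV by auto
    have bq: "b' (lam u) (lam u, lam v) = ff u (b u (u, v))" using ed2 edeq q_def by simp
    have dlu: "dep (lam u) = dep u" using Cu' by blast
    have dlv: "dep (lam v) = dep v \<and> par (lam v) = lam u"
      using edge_cases[OF E1]
    proof
      assume c: "lam u \<noteq> r \<and> lam v = par (lam u) \<and> dep (lam u) = Suc (dep (lam v))"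
      then have ur: "u \<noteq> r" using lam_r by auto
      then have c2: "par (lam u) = lam (par u)"
        "ff u (b u (u, par u)) = b' (lam u) (lam u, lam (par u))" using Cu' by blast+
      have "ff u (b u (u, par u)) = ff u (b u (u, v))" using c c2 bq by simp
      moreover have "b u (u, par u) \<in> topspace (Xdd u)" "b u (u,v) \<in> topspace (Xdd u)"
        using bij_betw_apply[OF bb[OF uV] oe[OF par(1)[OF uV ur]]] buv PT(1)[OF uV] by blast+
      ultimately have "b u (u, par u) = b u (u, v)" using injfu by (meson inj_onD)
      then have "(u, par u) = (u, v)"
        using bij_betw_imp_inj_on[OF bb[OF uV]] oe[OF par(1)[OF uV ur]] oe[OF uv] by (meson inj_onD)
      then have "v = par u" by simp
      then show ?thesis using par(2)[OF uV ur] du by simp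
    next
      assume c: "lam v \<noteq> r \<and> lam u = par (lam v) \<and> dep (lam v) = Suc (dep (lam u))"
      then show ?thesis using dlu du by simp
    qed
    have bvu: "b v (v,u) \<in> P v" using bij_betw_apply[OF bb[OF vV] oe[OF vu]] .
    have b'vu: "b' (lam v) (lam v, lam u) \<in> P' (lam v)" using bij_betw_apply[OF bb'[OF lvV] oe[OF sym[OF E1]]] .
    have fv: "ff v = HM v (lam v) (b v (v, u)) (b' (lam v) (lam v, lam u))" using lam_step(2)[OF vV vr] u_def by simp
    show "Cv v" unfolding Cv_def
      using lvV HM[OF vV lvV bvu b'vu] fv dlv E1 bq vr unfolding u_def[symmetric] by simp
  qed
qed

lemma Cv: "v \<in> V \<Longrightarrow> Cv v" using Cv_all by blast

end



context sys begin

lemma CvD: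
  assumes "v \<in> V"
  shows "lam v \<in> V" "homeomorphic_map (Xdd v) (Xdd' (lam v)) (ff v)"
   "ff v ` (topspace (Xdd v) - P v) = topspace (Xdd' (lam v)) - P' (lam v)" "dep (lam v) = dep v"
   "v \<noteq> r \<Longrightarrow> (lam (par v), lam v) \<in> E" "v \<noteq> r \<Longrightarrow> par (lam v) = lam (par v)"
   "v \<noteq> r \<Longrightarrow> ff v (b v (v, par v)) = b' (lam v) (lam v, lam (par v))"
   "v \<noteq> r \<Longrightarrow> b' (lam (par v)) (lam (par v), lam v) = ff (par v) (b (par v) (par v, v))"
  using Cv[OF assms] unfolding Cv_def by blast+

lemma fP: "v \<in> V \<Longrightarrow> ff v ` P v = P' (lam v)"
  by (rule hm_P[OF CvD(2,3) PT(1) PT(2)[OF CvD(1)]])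

lemma finj: "v \<in> V \<Longrightarrow> inj_on (ff v) (topspace (Xdd v))"
  using homeomorphic_imp_injective_map[OF CvD(2)] .

lemma bP: "t \<in> V \<Longrightarrow> (t,s) \<in> E \<Longrightarrow> b t (t,s) \<in> P t"
  using bij_betw_apply[OF bb oe] .

lemma b_inj: "t \<in> V \<Longrightarrow> (t,s) \<in> E \<Longrightarrow> (t,s') \<in> E \<Longrightarrow> b t (t,s) = b t (t,s') \<Longrightarrow> s = s'"
  using bij_betw_imp_inj_on[OF bb] oe by (metis inj_onD prod.inject)

lemma b'_inj: "t \<in> V \<Longrightarrow> (t,s) \<in> E \<Longrightarrow> (t,s') \<in> E \<Longrightarrow> b' t (t,s) = b' t (t,s') \<Longrightarrow> s = s'"
  using bij_betw_imp_inj_on[OF bb'] oe by (metis inj_onD prod.inject)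

lemma fb_inj:
  assumes "u \<in> V" "(u,v) \<in> E" "(u,w) \<in> E" "ff u (b u (u,v)) = ff u (b u (u,w))"
  shows "v = w"
proof -
  have "b u (u,v) \<in> topspace (Xdd u)" "b u (u,w) \<in> topspace (Xdd u)"
    using bP[OF assms(1,2)] bP[OF assms(1,3)] PT(1)[OF assms(1)] by blast+
  then have "b u (u,v) = b u (u,w)" using finj[OF assms(1)] assms(4) by (meson inj_onD)
  then show ?thesis using b_inj assms by blast
qed

lemma lam_inj_n: "\<forall>v w. v \<in> V \<longrightarrow> w \<in> V \<longrightarrow> dep v = n \<longrightarrow> lam v = lam w \<longrightarrow> v = w"
proof (induction n)
  case 0
  show ?case
  proof (intro allI impI)
    fix v w assume a: "v \<in> V" "w \<in> V" "dep v = 0" "lam v = lam w"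
    then have "dep w = 0" using CvD(4)[OF a(1)] CvD(4)[OF a(2)] by simp
    then show "v = w" using dep0 a by metis
  qed
next
  case (Suc n)
  show ?case
  proof (intro allI impI)
    fix v w assume a: "v \<in> V" "w \<in> V" "dep v = Suc n" "lam v = lam w"
    then have dw: "dep w = Suc n" using CvD(4)[OF a(1)] CvD(4)[OF a(2)] by simp
    have vr: "v \<noteq> r" "w \<noteq> r" using a(3) dw dep_r by auto
    have "lam (par v) = lam (par w)" using CvD(6)[OF a(1) vr(1)] CvD(6)[OF a(2) vr(2)] a(4) by simp
    moreover have "dep (par v) = n" using par(2)[OF a(1) vr(1)] a(3) by simp
    ultimately have pe: "par v = par w" using Suc.IH par(3)[OF a(1) vr(1)] par(3)[OF a(2) vr(2)] by blast
    define u where "u = par v"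
    have uV: "u \<in> V" using par(3)[OF a(1) vr(1)] u_def by simp
    have e1: "(u,v) \<in> E" "(u,w) \<in> E" using par(1)[OF a(1) vr(1)] par(1)[OF a(2) vr(2)] sym pe u_def by auto
    have "ff u (b u (u,v)) = ff u (b u (u,w))"
      using CvD(8)[OF a(1) vr(1)] CvD(8)[OF a(2) vr(2)] a(4) pe u_def by simp
    then show "v = w" by (rule fb_inj[OF uV e1])
  qed
qed

lemma lam_inj: "inj_on lam V"
proof (rule inj_onI)
  fix v w assume "v \<in> V" "w \<in> V" "lam v = lam w"
  then show "v = w" using lam_inj_n[of "dep v"] by blast
qed

lemma lam_surj_n: "\<forall>w\<in>V. dep w = n \<longrightarrow> (\<exists>v\<in>V. lam v = w)"
proof (induction n)
  case 0
  then show ?case using dep0 lam_r rV by metis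
next
  case (Suc n)
  show ?case
  proof (intro ballI impI)
    fix w assume wV: "w \<in> V" and dw: "dep w = Suc n"
    then have wr: "w \<noteq> r" using dep_r by auto
    define u' where "u' = par w"
    have u'V: "u' \<in> V" and du': "dep u' = n" and wu': "(w,u') \<in> E"
      using par[OF wV wr] dw u'_def by auto
    obtain u where uV: "u \<in> V" and uu: "lam u = u'" using Suc.IH u'V du' by blast
    have uw: "(u', w) \<in> E" using sym[OF wu'] .
    have "b' u' (u', w) \<in> P' u'" using bij_betw_apply[OF bb'[OF u'V] oe[OF uw]] .
    then have "b' u' (u', w) \<in> ff u ` P u" using fP[OF uV] uu by simp
    then obtain pp where pp: "pp \<in> P u" "b' u' (u', w) = ff u pp" by blast
    then obtain es where es: "es \<in> out_edges E u" "pp = b u es"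
      using bij_betw_imp_surj_on[OF bb[OF uV]] by (metis imageE)
    obtain s where s: "es = (u,s)" "(u,s) \<in> E" using es(1) unfolding out_edges_def by (cases es) auto
    have q: "b' u' (u', w) = ff u (b u (u,s))" using pp es s by simp
    show "\<exists>v\<in>V. lam v = w"
      using edge_cases[OF s(2)]
    proof
      assume c: "u \<noteq> r \<and> s = par u \<and> dep u = Suc (dep s)"
      then have "b' u' (u', w) = b' u' (u', lam (par u))" using q CvD(7)[OF uV] uu by simp
      moreover have "(u', lam (par u)) \<in> E" using CvD(5)[OF uV] c sym uu by blast
      ultimately have "w = lam (par u)" using b'_inj[OF u'V uw] by blast
      then have "w = par u'" using CvD(6)[OF uV] c uu by simp
      moreover have "u' \<noteq> r" using CvD(4)[OF uV] c uu dep_r by auto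
      ultimately show ?thesis using par(2)[OF u'V] u'_def dw du' by simp
    next
      assume c: "s \<noteq> r \<and> u = par s \<and> dep s = Suc (dep u)"
      have sV: "s \<in> V" using s(2) EV by auto
      have "b' (lam u) (lam u, lam s) = ff u (b u (u, s))" using CvD(8)[OF sV] c by simp
      then have "b' u' (u', lam s) = b' u' (u', w)" using q uu by simp
      moreover have "(u', lam s) \<in> E" using CvD(5)[OF sV] c uu by simp
      ultimately have "lam s = w" using b'_inj[OF u'V _ uw] by blast
      then show ?thesis using sV by blast
    qed
  qed
qed

lemma lam_bij: "bij_betw lam V V"
proof -
  have "lam ` V \<subseteq> V" using CvD(1) by blast
  moreover have "V \<subseteq> lam ` V"
  proof
    fix w assume "w \<in> V"
    then obtain v where "v \<in> V" "lam v = w" using lam_surj_n[of "dep w"] by blast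
    then show "w \<in> lam ` V" by blast
  qed
  ultimately have "lam ` V = V" by (rule subset_antisym)
  then show ?thesis using lam_inj unfolding bij_betw_def by simp
qed

lemma lam_edge: "(s,t) \<in> E \<Longrightarrow> (lam s, lam t) \<in> E"
proof -
  assume st: "(s,t) \<in> E"
  then have V: "s \<in> V" "t \<in> V" using EV by auto
  show ?thesis using edge_cases[OF st]
  proof
    assume "s \<noteq> r \<and> t = par s \<and> dep s = Suc (dep t)"
    then show ?thesis using CvD(5)[OF V(1)] sym by blast
  next
    assume "t \<noteq> r \<and> s = par t \<and> dep t = Suc (dep s)"
    then show ?thesis using CvD(5)[OF V(2)] by blast
  qed
qed

lemma lam_edge_rev: "s \<in> V \<Longrightarrow> t \<in> V \<Longrightarrow> (lam s, lam t) \<in> E \<Longrightarrow> (s,t) \<in> E"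
proof -
  assume V: "s \<in> V" "t \<in> V" and e: "(lam s, lam t) \<in> E"
  show ?thesis using edge_cases[OF e]
  proof
    assume c: "lam s \<noteq> r \<and> lam t = par (lam s) \<and> dep (lam s) = Suc (dep (lam t))"
    then have sr: "s \<noteq> r" using lam_r by auto
    then have "lam t = lam (par s)" using c CvD(6)[OF V(1)] by simp
    then have "t = par s" using inj_onD[OF lam_inj _ V(2) par(3)[OF V(1) sr]] by simp
    then show ?thesis using par(1)[OF V(1) sr] by simp
  next
    assume c: "lam t \<noteq> r \<and> lam s = par (lam t) \<and> dep (lam t) = Suc (dep (lam s))"
    then have tr: "t \<noteq> r" using lam_r by auto
    then have "lam s = lam (par t)" using c CvD(6)[OF V(2)] by simp
    then have "s = par t" using inj_onD[OF lam_inj _ V(1) par(3)[OF V(2) tr]] by simp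
    then show ?thesis using par(1)[OF V(2) tr] sym by simp
  qed
qed

lemma compat:
  assumes tV: "t \<in> V" and e: "e \<in> out_edges E t"
  shows "b' (lam t) (edge_map lam e) = ff t (b t e)"
proof -
  obtain s where s: "e = (t,s)" "(t,s) \<in> E" using e unfolding out_edges_def by (cases e) auto
  show ?thesis using edge_cases[OF s(2)]
  proof
    assume c: "t \<noteq> r \<and> s = par t \<and> dep t = Suc (dep s)"
    then show ?thesis using CvD(7)[OF tV] s unfolding edge_map_def by simp
  next
    assume c: "s \<noteq> r \<and> t = par s \<and> dep s = Suc (dep t)"
    have sV: "s \<in> V" using s EV by auto
    show ?thesis using CvD(8)[OF sV] c s unfolding edge_map_def by simp
  qed
qed

lemma iso: "tree_system_iso V E Xdd P b Xdd' P' b' lam ff"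
  unfolding tree_system_iso_def tree_automorphism_def
  using lam_bij lam_edge lam_edge_rev CvD(2,3) compat by blast

end

theorem lemma1p2:
  fixes X :: "'c topology"
    and V :: "'v set" and E :: "('v \<times> 'v) set"
    and Xdd :: "'v \<Rightarrow> 'a topology" and P :: "'v \<Rightarrow> 'a set" and b :: "'v \<Rightarrow> 'v \<times> 'v \<Rightarrow> 'a"
    and Xdd' :: "'v \<Rightarrow> 'b topology" and P' :: "'v \<Rightarrow> 'b set" and b' :: "'v \<Rightarrow> 'v \<times> 'v \<Rightarrow> 'b"
  assumes "topspace X \<noteq> {}" and "compact_space X" and "metrizable_space X"
    and "countable_inf_valence_tree V E"
    and "tree_system V E X Xdd P b"
    and "tree_system V E X Xdd' P' b'"
  shows "\<exists>lam f. tree_system_iso V E Xdd P b Xdd' P' b' lam f"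
proof -
  have "V \<noteq> {}" using assms(4) unfolding countable_inf_valence_tree_def is_tree_def by blast
  then obtain r where rV: "r \<in> V" by blast
  interpret sys V E r X Xdd P b Xdd' P' b'
    by (unfold_locales) (use assms rV in auto)
  show ?thesis using iso by blast
qed



end
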